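(* Let $\tau\subset\mathbb{Z}^n_{\ge0}$ be a B-facet which contains a standard basis vector $e_i$ (the point with $i$-th coordinate $1$ and all others $0$). Then $\tau$ is a $B_1$-facet: every point of $\tau$ other than $e_i$ has $i$-th coordinate $0$.
   Context: A $k$-simplex is a set of $k+1$ affinely independent points. A $k$-simplex $S\subset\mathbb{Z}^n_{\ge0}$ is a B-simplex if there is a coordinate index $i$ such that exactly $k$ of its vertices lie in $\{x_i=0\}$ and the remaining vertex has $i$-th coordinate $1$. A B-facet in $\mathbb{Z}^n_{\ge0}$ is a finite set $\tau\subset\mathbb{Z}^n_{\ge 0}$ whose affine span is a hyperplane $\{x:\langle a,x\rangle=b\}$ with all $a_j>0$, such that every $(n-1)$-simplex with vertices in $\tau$ is a B-simplex. A $B_1$-facet is one for which there is an index $i$ such that exactly one point of $\tau$ has nonzero $i$-th coordinate, that coordinate being $1$. *)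

theory Defs
  imports "HOL-Analysis.Analysis"
begin

text \<open>Points of Z^n_{>=0} are modelled as vectors in real^'n whose coordinates
are natural numbers; n = CARD('n).\<close>

definition lattice_nonneg :: "(real ^ 'n) set" where
  "lattice_nonneg = {x. \<forall>j. x $ j \<in> \<nat>}"

definition is_simplex :: "nat \<Rightarrow> (real ^ 'n) set \<Rightarrow> bool" where
  "is_simplex k S \<longleftrightarrow> finite S \<and> card S = k + 1 \<and> \<not> affine_dependent S"

definition B_simplex :: "nat \<Rightarrow> (real ^ 'n) set \<Rightarrow> bool" where
  "B_simplex k S \<longleftrightarrow> is_simplex k S \<and> S \<subseteq> lattice_nonneg \<and>
     (\<exists>i. card {v\<in>S. v $ i = 0} = k \<and> (\<forall>v\<in>S. v $ i \<noteq> 0 \<longrightarrow> v $ i = 1))"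

definition B_facet :: "(real ^ 'n) set \<Rightarrow> bool" where
  "B_facet \<tau> \<longleftrightarrow> finite \<tau> \<and> \<tau> \<subseteq> lattice_nonneg \<and>
     (\<exists>a b. (\<forall>j. a $ j > 0) \<and> affine hull \<tau> = {x. inner a x = b}) \<and>
     (\<forall>S. S \<subseteq> \<tau> \<and> is_simplex (CARD('n) - 1) S \<longrightarrow> B_simplex (CARD('n) - 1) S)"

definition B1_facet :: "(real ^ 'n) set \<Rightarrow> bool" where
  "B1_facet \<tau> \<longleftrightarrow> B_facet \<tau> \<and>
     (\<exists>i. card {v\<in>\<tau>. v $ i \<noteq> 0} = 1 \<and> (\<forall>v\<in>\<tau>. v $ i \<noteq> 0 \<longrightarrow> v $ i = 1))"

end

theory Submission
  imports Defs
begin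

lemma key:
  fixes a x :: "real ^ 'n" and i :: 'n
  assumes apos: "\<forall>j. a $ j > 0" and xn: "\<forall>j. x $ j \<ge> 0"
    and eq: "inner a x = a $ i" and xi: "x $ i \<ge> 1"
  shows "x = axis i 1"
proof -
  have S: "inner a x = (\<Sum>j\<in>UNIV. a $ j * x $ j)" by (simp add: inner_vec_def)
  have nn: "\<And>j. a $ j * x $ j \<ge> 0" using apos xn by (simp add: less_imp_le)
  have "a $ i * x $ i \<le> inner a x" unfolding S
    by (rule member_le_sum) (auto simp: nn)
  hence "a $ i * x $ i \<le> a $ i" using eq by simp
  moreover have ai: "a $ i > 0" using apos by simp
  ultimately have "x $ i \<le> 1" by (simp add: mult_le_cancel_left1)
  hence xi1: "x $ i = 1" using xi by linarith
  have "x $ k = 0" if "k \<noteq> i" for k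
  proof -
    have "(\<Sum>j\<in>{i,k}. a $ j * x $ j) \<le> (\<Sum>j\<in>UNIV. a $ j * x $ j)"
      by (rule sum_mono2) (auto simp: nn)
    hence "a $ i * x $ i + a $ k * x $ k \<le> a $ i" using that eq S by simp
    hence "a $ k * x $ k \<le> 0" using xi1 by simp
    moreover have "a $ k > 0" using apos by simp
    ultimately have "x $ k \<le> 0" by (simp add: mult_le_0_iff)
    thus ?thesis using xn by (meson order_antisym)
  qed
  thus ?thesis using xi1 by (auto simp: vec_eq_iff axis_def)
qed

theorem claim2p5:
  fixes \<tau> :: "(real ^ 'n) set" and i :: 'n
  assumes "B_facet \<tau>" and "axis i 1 \<in> \<tau>"
  shows "B1_facet \<tau> \<and> (\<forall>x\<in>\<tau>. x \<noteq> axis i 1 \<longrightarrow> x $ i = 0)"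
proof -
  from assms(1) obtain a b where apos: "\<forall>j. a $ j > 0" and H: "affine hull \<tau> = {x. inner a x = b}"
    and L: "\<tau> \<subseteq> lattice_nonneg" unfolding B_facet_def by blast
  have onH: "inner a x = b" if "x \<in> \<tau>" for x
    using hull_subset[of \<tau> affine] that H by blast
  have b: "b = a $ i" using onH[OF assms(2)] by (simp add: inner_axis)
  have two: "\<forall>x\<in>\<tau>. x \<noteq> axis i 1 \<longrightarrow> x $ i = 0"
  proof (intro ballI impI, rule ccontr)
    fix x assume x: "x \<in> \<tau>" "x \<noteq> axis i 1" "x $ i \<noteq> 0"
    have nat: "\<And>j. x $ j \<in> \<nat>" using L x(1) unfolding lattice_nonneg_def by blast
    have xn: "\<forall>j. x $ j \<ge> 0" using nat Nats_cases by (metis of_nat_0_le_iff)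
    obtain m :: nat where m: "x $ i = real m" using nat[of i] Nats_def by auto
    hence "x $ i \<ge> 1" using x(3) by simp
    hence "x = axis i 1" using key[OF apos xn] onH[OF x(1)] b by simp
    thus False using x(2) by simp
  qed
  have "{v\<in>\<tau>. v $ i \<noteq> 0} = {axis i 1}" using two assms(2) by (auto simp: axis_def)
  hence "card {v\<in>\<tau>. v $ i \<noteq> 0} = 1 \<and> (\<forall>v\<in>\<tau>. v $ i \<noteq> 0 \<longrightarrow> v $ i = 1)"
    using two by (auto simp: axis_def)
  thus ?thesis using two assms(1) unfolding B1_facet_def by blast
qed

end
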